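(* Let $\epsilon>0$ with $1/\epsilon$ an integer, let $\mathcal{E}>0$, and let $X_1,\dots,X_n$ be independent random variables all supported on $\mathcal{V}=\{0,\epsilon\mathcal{E},2\epsilon\mathcal{E},\dots,\mathcal{E}/\epsilon\}$. Let $k$ be an integer, let $S^*\subseteq[n]$ be a set with $|S^*|\le k$ maximizing $\mathbb{E}[\mathcal{M}(S^* )]$, and assume $\mathcal{E}\in[(1-\frac1e)\mathbb{E}[\mathcal{M}(S^* )],\mathbb{E}[\mathcal{M}(S^* )]]$. Let $v_{\mathrm{heavy}}\in\mathcal{V}$ be the maximal $v\in\mathcal{V}$ with $\Pr[\mathcal{M}(S^* )\le v]<1-\epsilon^2$ ($v_{\mathrm{heavy}}=\infty$ if none exists), let $\mathcal{V}_{\mathrm{critical}}=\mathcal{V}\cap[0,v_{\mathrm{heavy}}]$, and suppose numbers $\tilde p_{\le v}$, $v\in\mathcal{V}_{\mathrm{critical}}$, satisfy $\Pr[\mathcal{M}(S^* )\le v]\le\tilde p_{\le v}<\Pr[\mathcal{M}(S^* )\le v]+2\epsilon^2$. If $\tilde S\subseteq[n]$ satisfies $\Pr[\mathcal{M}(\tilde S)\le v]\le(1+\epsilon^2)\tilde p_{\le v}+\epsilon^2$ for every $v\in\mathcal{V}_{\mathrm{critical}}$, then $\mathbb{E}[\mathcal{M}(\tilde S)]\ge(1-23\epsilon)\cdot\mathbb{E}[\mathcal{M}(S^* )]$.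
   Context: For $S\subseteq[n]$, $\mathcal{M}(S)=\max_{i\in S}X_i$. A set $\tilde S$ satisfying the displayed inequality for all $v\in\mathcal{V}_{\mathrm{critical}}$ is called CDF-equivalent. *)

theory Defs
  imports "HOL-Probability.Probability"
begin

definition grid :: "real \<Rightarrow> real \<Rightarrow> real set" where
  "grid eps E = {real j * eps * E | j::nat. real j * eps * E \<le> E / eps}"

text \<open>M(S)(omega) = max_{i in S} X_i(omega); convention 0 for S empty
  (all variables are nonnegative).\<close>
definition maxS :: "(nat \<Rightarrow> 'a \<Rightarrow> real) \<Rightarrow> nat set \<Rightarrow> 'a \<Rightarrow> real" where
  "maxS X S \<omega> = (if S = {} then 0 else Max ((\<lambda>i. X i \<omega>) ` S))"

definition cdfS :: "'a measure \<Rightarrow> (nat \<Rightarrow> 'a \<Rightarrow> real) \<Rightarrow> nat set \<Rightarrow> real \<Rightarrow> real" where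
  "cdfS M X S v = measure M {\<omega> \<in> space M. maxS X S \<omega> \<le> v}"

text \<open>V_critical = V \<inter> [0, v_heavy], where v_heavy is the maximal v in V with
  Pr[M(S*) <= v] < 1 - eps^2, and v_heavy = infinity (so V_critical = V) if none exists.\<close>
definition Vcrit :: "real \<Rightarrow> real \<Rightarrow> (real \<Rightarrow> real) \<Rightarrow> real set" where
  "Vcrit eps E F =
     (let H = {v \<in> grid eps E. F v < 1 - eps^2} in
      if H = {} then grid eps E else {v \<in> grid eps E. 0 \<le> v \<and> v \<le> Max H})"

end

theory Submission
  imports Defs
begin

lemma grid_char:
  assumes "eps = 1 / real m" "m > 0" "E > 0"
  shows "x \<in> grid eps E \<longleftrightarrow> (\<exists>j. j \<le> m^2 \<and> x = real j * eps * E)"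
proof -
  have "real j * eps * E \<le> E / eps \<longleftrightarrow> j \<le> m^2" for j
  proof -
    have m0: "real m > 0" using assms by simp
    have "real j * eps * E \<le> E / eps \<longleftrightarrow> (real j * E) / real m \<le> real m * E"
      using assms by (simp add: mult.commute)
    also have "\<dots> \<longleftrightarrow> real j * E \<le> (real m * real m) * E"
      using m0 by (simp add: pos_divide_le_eq ac_simps)
    also have "\<dots> \<longleftrightarrow> real j \<le> real m * real m" using assms by simp
    also have "\<dots> \<longleftrightarrow> j \<le> m^2" by (simp add: power2_eq_square flip: of_nat_mult)
    finally show ?thesis .
  qed
  then show ?thesis unfolding grid_def by auto
qed

lemma count_sum:
  assumes "i \<le> N"
  shows "(\<Sum>j<N. (1::real) - (if real i \<le> real j then 1 else 0)) = real i"
proof -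
  have "(\<Sum>j<N. (1::real) - (if real i \<le> real j then 1 else 0)) = (\<Sum>j<N. if j < i then 1 else 0)"
    by (intro sum.cong) auto
  also have "\<dots> = real (card {j. j < N \<and> j < i})"
    by (simp add: sum.If_cases Int_def)
  also have "{j. j < N \<and> j < i} = {..<i}" using assms by auto
  finally show ?thesis by simp
qed

lemma (in prob_space) layer:
  fixes f :: "'a \<Rightarrow> real"
  assumes fm: "f \<in> borel_measurable M" and d: "d > 0"
    and ae: "AE \<omega> in M. \<exists>i. i \<le> N \<and> f \<omega> = real i * d"
  shows "expectation f = d * (\<Sum>j<N. 1 - prob {\<omega> \<in> space M. f \<omega> \<le> real j * d})"
proof -
  let ?A = "\<lambda>j. {\<omega> \<in> space M. f \<omega> \<le> real j * d}"
  have A: "?A j \<in> events" for j using fm by measurable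
  have "AE \<omega> in M. f \<omega> = d * (\<Sum>j<N. 1 - indicator (?A j) \<omega> :: real)"
    using ae AE_space
  proof eventually_elim
    case (elim \<omega>)
    then obtain i where i: "i \<le> N" "f \<omega> = real i * d" by auto
    have "(\<Sum>j<N. 1 - indicator (?A j) \<omega> :: real) = (\<Sum>j<N. (1::real) - (if real i \<le> real j then 1 else 0))"
      using d i(2) elim by (intro sum.cong) (auto simp: indicator_def  AE_iff_measurable)
    then show ?case using count_sum[OF i(1)] i(2) by simp
  qed
  then have "expectation f = expectation (\<lambda>\<omega>. d * (\<Sum>j<N. 1 - indicator (?A j) \<omega> :: real))"
    using fm A by (intro integral_cong_AE) auto
  also have "\<dots> = d * (\<Sum>j<N. expectation (\<lambda>\<omega>. 1 - indicator (?A j) \<omega> :: real))"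
  proof -
    have ii: "integrable M (indicator (?A j) :: 'a \<Rightarrow> real)" for j
      using A[of j] by (intro integrable_real_indicator) (auto simp: emeasure_eq_measure)
    have "expectation (\<lambda>\<omega>. \<Sum>j<N. 1 - indicator (?A j) \<omega> :: real) = (\<Sum>j<N. expectation (\<lambda>\<omega>. 1 - indicator (?A j) \<omega> :: real))"
      using A by (intro Bochner_Integration.integral_sum) (auto intro!: Bochner_Integration.integrable_diff ii)
    then show ?thesis by (simp add: integral_mult_right_zero)
  qed
  also have "\<dots> = d * (\<Sum>j<N. 1 - prob (?A j))"
  proof -
    have ii: "integrable M (indicator (?A j) :: 'a \<Rightarrow> real)" for j
      using A[of j] by (intro integrable_real_indicator) (auto simp: emeasure_eq_measure)
    have "expectation (\<lambda>\<omega>. 1 - indicator (?A j) \<omega> :: real) = 1 - prob (?A j)" for j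
      using ii[of j] A[of j] by (subst Bochner_Integration.integral_diff) (auto simp: Int_absorb2 sets.sets_into_space prob_space)
    then show ?thesis by simp
  qed
  finally show ?thesis .
qed

theorem lemma4p1:
  fixes M :: "'a measure" and X :: "nat \<Rightarrow> 'a \<Rightarrow> real"
    and n k :: nat and eps E :: real and Sstar St :: "nat set" and pt :: "real \<Rightarrow> real"
  assumes P: "prob_space M"
    and eps_pos: "eps > 0" and eps_int: "\<exists>m::nat. 1 / eps = real m"
    and E_pos: "E > 0"
    and indep: "prob_space.indep_vars M (\<lambda>_. borel) X {1..n}"
    and supp: "\<forall>i\<in>{1..n}. AE \<omega> in M. X i \<omega> \<in> grid eps E"
    and Sstar_sub: "Sstar \<subseteq> {1..n}" and Sstar_card: "card Sstar \<le> k"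
    and Sstar_opt: "\<forall>S. S \<subseteq> {1..n} \<and> card S \<le> k \<longrightarrow>
                      prob_space.expectation M (maxS X S) \<le> prob_space.expectation M (maxS X Sstar)"
    and E_lo: "(1 - 1 / exp 1) * prob_space.expectation M (maxS X Sstar) \<le> E"
    and E_hi: "E \<le> prob_space.expectation M (maxS X Sstar)"
    and pt_bounds: "\<forall>v \<in> Vcrit eps E (cdfS M X Sstar).
                      cdfS M X Sstar v \<le> pt v \<and> pt v < cdfS M X Sstar v + 2 * eps^2"
    and St_sub: "St \<subseteq> {1..n}"
    and St_cdf: "\<forall>v \<in> Vcrit eps E (cdfS M X Sstar).
                      cdfS M X St v \<le> (1 + eps^2) * pt v + eps^2"
  shows "prob_space.expectation M (maxS X St) \<ge> (1 - 23 * eps) * prob_space.expectation M (maxS X Sstar)"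
  proof -
  interpret prob_space M by (rule P)
  obtain m :: nat where m: "1 / eps = real m" using eps_int by blast
  have m0: "m > 0" using m eps_pos by (cases "m = 0") auto
  have epsm: "eps = 1 / real m" proof - have "eps = 1 / (1 / eps)" by simp then show ?thesis using m by simp qed
  define d where "d = eps * E"
  define N where "N = m^2"
  have d0: "d > 0" using eps_pos E_pos by (simp add: d_def)
  have Neps: "real N * eps^2 = 1" using m0 by (simp add: N_def epsm power2_eq_square)
  have gridc: "\<And>x. x \<in> grid eps E \<longleftrightarrow> (\<exists>j. j \<le> N \<and> x = real j * eps * E)"
    using grid_char[OF epsm m0 E_pos] by (simp add: N_def)
  have gfin: "finite (grid eps E)"
  proof -
    have "grid eps E = (\<lambda>j. real j * eps * E) ` {..N}" using gridc by auto
    then show ?thesis by simp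
  qed
  have Xm: "X i \<in> borel_measurable M" if "i \<in> {1..n}" for i
    using indep that unfolding indep_vars_def2 by auto
  have AEall: "AE \<omega> in M. \<forall>i\<in>{1..n}. X i \<omega> \<in> grid eps E"
    using supp by (subst AE_finite_all) auto
  have formula: "expectation (maxS X S) = d * (\<Sum>j<N. 1 - cdfS M X S (real j * d))"
    if S: "S \<subseteq> {1..n}" for S
  proof -
    have fS: "finite S" using S finite_subset by blast
    have meas: "maxS X S \<in> borel_measurable M"
    proof (cases "S = {}")
      case True then show ?thesis by (simp add: maxS_def[abs_def])
    next
      case False
      then have "maxS X S = (\<lambda>\<omega>. Max ((\<lambda>i. X i \<omega>) ` S))" by (simp add: maxS_def[abs_def])
      moreover have "(\<lambda>\<omega>. Max ((\<lambda>i. X i \<omega>) ` S)) \<in> borel_measurable M"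
        by (rule borel_measurable_Max[OF fS]) (use Xm S in auto)
      ultimately show ?thesis by simp
    qed
    have ae: "AE \<omega> in M. \<exists>i. i \<le> N \<and> maxS X S \<omega> = real i * d"
      using AEall
    proof eventually_elim
      case (elim \<omega>)
      show ?case
      proof (cases "S = {}")
        case True then show ?thesis by (auto simp: maxS_def intro!: exI[of _ 0])
      next
        case False
        have "Max ((\<lambda>i. X i \<omega>) ` S) \<in> (\<lambda>i. X i \<omega>) ` S" using False fS by (intro Max_in) auto
        then obtain i where "i \<in> S" "maxS X S \<omega> = X i \<omega>" using False by (auto simp: maxS_def)
        then show ?thesis using elim S gridc[of "X i \<omega>"] by (auto simp: d_def mult.assoc)
      qed
    qed
    show ?thesis using layer[OF meas d0 ae] unfolding cdfS_def by simp
  qed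
  let ?Fs = "cdfS M X Sstar" and ?Ft = "cdfS M X St"
  have cdf_le1: "cdfS M X S v \<le> 1" for S v unfolding cdfS_def by simp
  have cdf_ge0: "cdfS M X S v \<ge> 0" for S v unfolding cdfS_def by simp
  have pointwise: "1 - ?Ft (real j * d) \<ge> 1 - ?Fs (real j * d) - 6 * eps^2" if j: "j < N" for j
  proof -
    let ?v = "real j * d"
    have vg: "?v \<in> grid eps E" using gridc[of "real j * d"] j by (auto simp: d_def mult.assoc intro!: exI[of _ j])
    have v0: "?v \<ge> 0" using d0 by simp
    show ?thesis
    proof (cases "?v \<in> Vcrit eps E ?Fs")
      case True
      then have a: "?Ft ?v \<le> (1 + eps^2) * pt ?v + eps^2" and b: "pt ?v < ?Fs ?v + 2 * eps^2"
        using pt_bounds St_cdf by auto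
      have e1: "eps \<le> 1" using epsm m0 by simp
      have e4: "eps^2 * eps^2 \<le> eps^2" proof -
        have "eps^2 \<le> 1" using e1 eps_pos by (simp add: power_le_one)
        then show ?thesis using eps_pos by (intro mult_right_le_one_le) auto
      qed
      have e5: "eps^2 * ?Fs ?v \<le> eps^2" using cdf_le1[of Sstar ?v] cdf_ge0[of Sstar ?v] by (intro mult_left_le) auto
      have "(1 + eps^2) * pt ?v \<le> (1 + eps^2) * (?Fs ?v + 2 * eps^2)"
        using b by (intro mult_left_mono) auto
      moreover have "(1 + eps^2) * (?Fs ?v + 2 * eps^2) = ?Fs ?v + 2 * eps^2 + eps^2 * ?Fs ?v + 2 * (eps^2 * eps^2)"
        by (simp add: ring_distribs)
      ultimately show ?thesis using a e4 e5 by linarith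
    next
      case False
      define H where "H = {v \<in> grid eps E. ?Fs v < 1 - eps^2}"
      have Hne: "H \<noteq> {}" using False vg unfolding Vcrit_def H_def[symmetric] by (auto simp: Let_def)
      have "\<not> ?v \<le> Max H" using False vg v0 Hne unfolding Vcrit_def H_def[symmetric] by (auto simp: Let_def)
      moreover have "finite H" using gfin by (simp add: H_def)
      ultimately have "?v \<notin> H" using Max_ge by blast
      then have "?Fs ?v \<ge> 1 - eps^2" using vg by (auto simp: H_def)
      moreover have "eps^2 \<ge> 0" by simp
      ultimately show ?thesis using cdf_le1[of St ?v] by linarith
    qed
  qed
  have "(\<Sum>j<N. 1 - ?Ft (real j * d)) \<ge> (\<Sum>j<N. 1 - ?Fs (real j * d) - 6 * eps^2)"
    using pointwise by (intro sum_mono) auto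
  also have "(\<Sum>j<N. 1 - ?Fs (real j * d) - 6 * eps^2) = (\<Sum>j<N. 1 - ?Fs (real j * d)) - 6"
    using Neps by (simp add: sum_subtractf)
  finally have sums: "(\<Sum>j<N. 1 - ?Ft (real j * d)) \<ge> (\<Sum>j<N. 1 - ?Fs (real j * d)) - 6" .
  have Et: "expectation (maxS X St) \<ge> expectation (maxS X Sstar) - 6 * d"
  proof -
    have "d * (\<Sum>j<N. 1 - ?Ft (real j * d)) \<ge> d * ((\<Sum>j<N. 1 - ?Fs (real j * d)) - 6)"
      using mult_left_mono[OF sums, of d] d0 by simp
    moreover have "d * ((\<Sum>j<N. 1 - ?Fs (real j * d)) - 6) = d * (\<Sum>j<N. 1 - ?Fs (real j * d)) - 6 * d"
      by (simp add: right_diff_distrib)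
    ultimately show ?thesis using formula[OF St_sub] formula[OF Sstar_sub] by linarith
  qed
  have "6 * d \<le> 6 * eps * expectation (maxS X Sstar)"
    using E_hi eps_pos by (simp add: d_def)
  moreover have "expectation (maxS X Sstar) \<ge> 0" using E_hi E_pos by simp
  moreover have "(1 - 23 * eps) * expectation (maxS X Sstar) = expectation (maxS X Sstar) - 23 * (eps * expectation (maxS X Sstar))"
    by (simp add: left_diff_distrib)
  moreover have "6 * eps * expectation (maxS X Sstar) = 6 * (eps * expectation (maxS X Sstar))" by simp
  moreover have "eps * expectation (maxS X Sstar) \<ge> 0" using calculation(2) eps_pos by simp
  ultimately show ?thesis using Et by linarith
qed

end
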